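(* Let $G=\square_{i=1}^t G^{(i)}$ be a product graph of dimension $t$ and let $M\subseteq V(G)$ with $|M|=m\le t$. Then there exist pairwise (vertex-)disjoint projections $H_1,\dots,H_m$ of $G$, each of dimension at least $t-m+1$, such that every $v\in M$ lies in exactly one of $H_1,\dots,H_m$ (and each $H_j$ contains exactly one vertex of $M$). *)

theory Defs
  imports Main "HOL-Library.FuncSet"
begin

text \<open>Factor graphs G^(i), i < t, have vertex sets V i and adjacency E i.\<close>

definition prod_verts :: "(nat \<Rightarrow> 'a set) \<Rightarrow> nat \<Rightarrow> (nat \<Rightarrow> 'a) set" where
  "prod_verts V t = PiE {..<t} V"

definition prod_adj :: "(nat \<Rightarrow> 'a \<Rightarrow> 'a \<Rightarrow> bool) \<Rightarrow> nat \<Rightarrow> (nat \<Rightarrow> 'a) \<Rightarrow> (nat \<Rightarrow> 'a) \<Rightarrow> bool" where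
  "prod_adj E t x y = (\<exists>i<t. E i (x i) (y i) \<and> (\<forall>k<t. k \<noteq> i \<longrightarrow> x k = y k))"

text \<open>Projection: the (induced) subgraph obtained by fixing the coordinates in
  J \<subseteq> {..<t} to the values of a vertex u; its dimension is the number
  t - card J of free coordinates.\<close>

definition proj_verts :: "(nat \<Rightarrow> 'a set) \<Rightarrow> nat \<Rightarrow> nat set \<Rightarrow> (nat \<Rightarrow> 'a) \<Rightarrow> (nat \<Rightarrow> 'a) set" where
  "proj_verts V t J u = {x \<in> prod_verts V t. \<forall>i\<in>J. x i = u i}"

definition proj_dim :: "nat \<Rightarrow> nat set \<Rightarrow> nat" where
  "proj_dim t J = t - card J"

end

theory Submission
  imports Defs
begin

lemma sep_lemma:
  fixes V :: "nat \<Rightarrow> 'a set" and t :: nat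
  shows "finite M \<Longrightarrow> M \<subseteq> prod_verts V t \<Longrightarrow>
    \<exists>J :: (nat \<Rightarrow> 'a) \<Rightarrow> nat set. (\<forall>v\<in>M. J v \<subseteq> {..<t} \<and> card (J v) \<le> card M - 1) \<and>
      (\<forall>v\<in>M. \<forall>w\<in>M. v \<noteq> w \<longrightarrow> (\<exists>i\<in>J v \<inter> J w. v i \<noteq> w i))"
proof (induction "card M" arbitrary: M rule: less_induct)
  case less
  show ?case
  proof (cases "card M \<le> 1")
    case True
    have "\<forall>v\<in>M. \<forall>w\<in>M. v = w"
      using True less.prems(1) by (metis card_le_Suc0_iff_eq One_nat_def)
    then show ?thesis by (rule_tac x="\<lambda>_. {}" in exI) auto
  next
    case False
    then obtain v w where vw: "v \<in> M" "w \<in> M" "v \<noteq> w"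
      by (metis card_le_Suc0_iff_eq One_nat_def less.prems(1))
    have "v \<in> PiE {..<t} V" "w \<in> PiE {..<t} V" using vw less.prems(2) unfolding prod_verts_def by auto
    then obtain i where i: "i < t" "v i \<noteq> w i"
      using vw(3) by (metis PiE_E ext lessThan_iff)
    define Ma where "Ma a = {x\<in>M. x i = a}" for a
    have "\<forall>a. \<exists>J :: (nat \<Rightarrow> 'a) \<Rightarrow> nat set. (\<forall>v\<in>Ma a. J v \<subseteq> {..<t} \<and> card (J v) \<le> card (Ma a) - 1) \<and>
      (\<forall>v\<in>Ma a. \<forall>w\<in>Ma a. v \<noteq> w \<longrightarrow> (\<exists>i\<in>J v \<inter> J w. v i \<noteq> w i))"
    proof
      fix a
      have sub: "Ma a \<subseteq> M" unfolding Ma_def by auto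
      have "Ma a \<noteq> M"
      proof
        assume "Ma a = M"
        then have "v i = a" "w i = a" using vw unfolding Ma_def by auto
        with i show False by simp
      qed
      then have "card (Ma a) < card M" using sub less.prems(1) by (meson psubsetI psubset_card_mono)
      moreover have "finite (Ma a)" using sub less.prems(1) finite_subset by blast
      moreover have "Ma a \<subseteq> prod_verts V t" using sub less.prems(2) by auto
      ultimately show "\<exists>J :: (nat \<Rightarrow> 'a) \<Rightarrow> nat set. (\<forall>v\<in>Ma a. J v \<subseteq> {..<t} \<and> card (J v) \<le> card (Ma a) - 1) \<and>
      (\<forall>v\<in>Ma a. \<forall>w\<in>Ma a. v \<noteq> w \<longrightarrow> (\<exists>i\<in>J v \<inter> J w. v i \<noteq> w i))"
        using less.hyps by blast
    qed
    then obtain JJ where JJ: "\<And>a. (\<forall>v\<in>Ma a. JJ a v \<subseteq> {..<t} \<and> card (JJ a v) \<le> card (Ma a) - 1) \<and>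
      (\<forall>v\<in>Ma a. \<forall>w\<in>Ma a. v \<noteq> w \<longrightarrow> (\<exists>i\<in>JJ a v \<inter> JJ a w. v i \<noteq> w i))"
      by metis
    have lt: "card (Ma a) < card M" for a
    proof -
      have sub: "Ma a \<subseteq> M" unfolding Ma_def by auto
      have "Ma a \<noteq> M"
      proof
        assume "Ma a = M"
        then have "v i = a" "w i = a" using vw unfolding Ma_def by auto
        with i show False by simp
      qed
      then show ?thesis using sub less.prems(1) by (meson psubsetI psubset_card_mono)
    qed
    define J where "J x = insert i (JJ (x i) x)" for x
    show ?thesis
    proof (rule exI[of _ J], intro conjI ballI impI)
      fix x assume x: "x \<in> M"
      then have xm: "x \<in> Ma (x i)" unfolding Ma_def by auto
      have "finite (JJ (x i) x)" using JJ[of "x i"] xm finite_subset by blast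
      then have "card (J x) \<le> Suc (card (JJ (x i) x))" unfolding J_def by (simp add: card_insert_if)
      moreover have "card (JJ (x i) x) \<le> card (Ma (x i)) - 1" using JJ[of "x i"] xm by blast
      moreover have "card (Ma (x i)) \<ge> 1"
        using xm less.prems(1) unfolding Ma_def by (metis (no_types, lifting) One_nat_def Suc_leI card_gt_0_iff empty_iff finite_subset mem_Collect_eq subsetI)
      ultimately have "card (J x) \<le> card M - 1" using lt[of "x i"] by linarith
      then show "card (J x) \<le> card M - 1" .
    next
      fix x assume x: "x \<in> M"
      then have xm: "x \<in> Ma (x i)" unfolding Ma_def by auto
      then show "J x \<subseteq> {..<t}"
        using JJ[of "x i"] xm i unfolding J_def by auto
    next
      fix x y assume xy: "x \<in> M" "y \<in> M" "x \<noteq> y"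
      show "\<exists>k\<in>J x \<inter> J y. x k \<noteq> y k"
      proof (cases "x i = y i")
        case True
        then have "x \<in> Ma (x i)" "y \<in> Ma (x i)" using xy unfolding Ma_def by auto
        then obtain k where "k \<in> JJ (x i) x \<inter> JJ (x i) y" "x k \<noteq> y k" using JJ[of "x i"] xy(3) by blast
        then show ?thesis unfolding J_def using True by auto
      next
        case False
        then show ?thesis unfolding J_def by auto
      qed
    qed
  qed
qed

theorem mainTheorem3:
  fixes V :: "nat \<Rightarrow> 'a set" and t :: nat and M :: "(nat \<Rightarrow> 'a) set"
  assumes "M \<subseteq> prod_verts V t" and "finite M" and "card M \<le> t"
  shows "\<exists>(J :: nat \<Rightarrow> nat set) (u :: nat \<Rightarrow> nat \<Rightarrow> 'a).
           (\<forall>j<card M. J j \<subseteq> {..<t} \<and> u j \<in> prod_verts V t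
                     \<and> proj_dim t (J j) \<ge> t - card M + 1) \<and>
           (\<forall>j<card M. \<forall>k<card M. j \<noteq> k \<longrightarrow>
                proj_verts V t (J j) (u j) \<inter> proj_verts V t (J k) (u k) = {}) \<and>
           (\<forall>v\<in>M. \<exists>!j. j < card M \<and> v \<in> proj_verts V t (J j) (u j)) \<and>
           (\<forall>j<card M. card (proj_verts V t (J j) (u j) \<inter> M) = 1)"
proof -
  obtain JM where JM: "\<forall>v\<in>M. JM v \<subseteq> {..<t} \<and> card (JM v) \<le> card M - 1"
    "\<forall>v\<in>M. \<forall>w\<in>M. v \<noteq> w \<longrightarrow> (\<exists>i\<in>JM v \<inter> JM w. v i \<noteq> w i)"
    using sep_lemma[OF assms(2,1)] by blast
  obtain f where f: "bij_betw f {0..<card M} M" using ex_bij_betw_nat_finite assms(2) by blast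
  have fM: "j < card M \<Longrightarrow> f j \<in> M" for j using f by (auto dest: bij_betwE)
  have finj: "j < card M \<Longrightarrow> k < card M \<Longrightarrow> f j = f k \<Longrightarrow> j = k" for j k
    using f unfolding bij_betw_def inj_on_def by auto
  have fsurj: "v \<in> M \<Longrightarrow> \<exists>j<card M. v = f j" for v
    using f unfolding bij_betw_def by (metis atLeastLessThan_iff imageE)
  have self: "v \<in> M \<Longrightarrow> v \<in> proj_verts V t (JM v) v" for v
    using assms(1) unfolding proj_verts_def by auto
  have disj: "v \<in> M \<Longrightarrow> w \<in> M \<Longrightarrow> v \<noteq> w \<Longrightarrow> proj_verts V t (JM v) v \<inter> proj_verts V t (JM w) w = {}" for v w
  proof -
    assume a: "v \<in> M" "w \<in> M" "v \<noteq> w"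
    then obtain i where "i \<in> JM v \<inter> JM w" "v i \<noteq> w i" using JM(2) by blast
    then show ?thesis unfolding proj_verts_def by auto
  qed
  show ?thesis
  proof (rule exI[of _ "\<lambda>j. JM (f j)"], rule exI[of _ f], intro conjI allI impI ballI)
    fix j assume j: "j < card M"
    have "card (JM (f j)) \<le> card M - 1" using JM(1) fM[OF j] by blast
    then show "t - card M + 1 \<le> proj_dim t (JM (f j))"
      using JM(1) fM[OF j] assms(1,3) j unfolding proj_dim_def by auto
  next
    fix j assume j: "j < card M"
    show "JM (f j) \<subseteq> {..<t}" using JM(1) fM[OF j] by auto
  next
    fix j assume j: "j < card M"
    show "f j \<in> prod_verts V t" using fM[OF j] assms(1) by auto
  next
    fix j k assume "j < card M" "k < card M" "j \<noteq> k"
    then show "proj_verts V t (JM (f j)) (f j) \<inter> proj_verts V t (JM (f k)) (f k) = {}"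
      using disj fM finj by metis
  next
    fix v assume v: "v \<in> M"
    then obtain j where j: "j < card M" "v = f j" using fsurj by blast
    show "\<exists>!j. j < card M \<and> v \<in> proj_verts V t (JM (f j)) (f j)"
    proof (rule ex1I[of _ j])
      show "j < card M \<and> v \<in> proj_verts V t (JM (f j)) (f j)" using j self v by auto
    next
      fix k assume k: "k < card M \<and> v \<in> proj_verts V t (JM (f k)) (f k)"
      show "k = j"
      proof (rule ccontr)
        assume "k \<noteq> j"
        then have "f k \<noteq> f j" using finj k j by metis
        then show False using disj[of "f k" "f j"] fM k j self v by blast
      qed
    qed
  next
    fix j assume j: "j < card M"
    have "proj_verts V t (JM (f j)) (f j) \<inter> M = {f j}"
    proof
      show "{f j} \<subseteq> proj_verts V t (JM (f j)) (f j) \<inter> M" using self fM j by auto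
    next
      show "proj_verts V t (JM (f j)) (f j) \<inter> M \<subseteq> {f j}"
      proof
        fix y assume y: "y \<in> proj_verts V t (JM (f j)) (f j) \<inter> M"
        show "y \<in> {f j}"
        proof (rule ccontr)
          assume "y \<notin> {f j}"
          then show False using disj[of y "f j"] y self fM j by blast
        qed
      qed
    qed
    then show "card (proj_verts V t (JM (f j)) (f j) \<inter> M) = 1" by simp
  qed
qed

end
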